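(* Let $B$ be a minimum-weight basis of the weighted uncertainty matroid $\mathcal{M}=(E,\mathcal{I},A,w)$ and let $Q$ be a certificate that verifies $B$. Let $e\in B$ and $e'\notin B$ with $U_e=U_{e'}=w_e=w_{e'}$ be such that $e\in C_{e'}$, where $C_{e'}$ is the fundamental circuit of $e'$ with respect to $B$. Then $Q'=(Q\setminus\{e'\})\cup\{e\}$ is a certificate that verifies $B'=(B\setminus\{e\})\cup\{e'\}$.
   Context: A weighted uncertainty matroid $\mathcal{M}=(E,\mathcal{I},A,w)$ consists of a matroid $M=(E,\mathcal{I})$ on a finite set $E$, for each $e\in E$ a non-empty finite union $A_e$ of bounded real intervals (each open or closed), and a weight $w_e\in A_e$. Let $L_e=\inf A_e$, $U_e=\sup A_e$. A minimum-weight basis is a basis of $M$ minimizing the sum of weights. A weight assignment is $w^*:E\to\mathbb{R}$ with $w^*_e\in A_e$, consistent with $Q$ if $w^*_e=w_e$ for $e\in Q$. $Q$ verifies a basis $B$ (is a certificate for $B$) if for every weight assignment consistent with $Q$, $B$ is a minimum-weight basis with respect to it. For a basis $B$ and $f\notin B$, the fundamental circuit of $f$ is the unique circuit contained in $B\cup\{f\}$. *)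

theory Defs
  imports Complex_Main
begin

definition matroid :: "'a set \<Rightarrow> ('a set \<Rightarrow> bool) \<Rightarrow> bool" where
  "matroid E indep \<longleftrightarrow>
     finite E \<and> indep {} \<and> (\<forall>X. indep X \<longrightarrow> X \<subseteq> E) \<and>
     (\<forall>X Y. indep X \<and> Y \<subseteq> X \<longrightarrow> indep Y) \<and>
     (\<forall>X Y. indep X \<and> indep Y \<and> card X < card Y \<longrightarrow> (\<exists>y\<in>Y - X. indep (insert y X)))"

definition basis :: "('a set \<Rightarrow> bool) \<Rightarrow> 'a set \<Rightarrow> bool" where
  "basis indep B \<longleftrightarrow> indep B \<and> (\<forall>X. indep X \<and> B \<subseteq> X \<longrightarrow> X = B)"

definition circuit :: "'a set \<Rightarrow> ('a set \<Rightarrow> bool) \<Rightarrow> 'a set \<Rightarrow> bool" where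
  "circuit E indep C \<longleftrightarrow> C \<subseteq> E \<and> \<not> indep C \<and> (\<forall>D. D \<subset> C \<longrightarrow> indep D)"

definition fundamental_circuit :: "'a set \<Rightarrow> ('a set \<Rightarrow> bool) \<Rightarrow> 'a set \<Rightarrow> 'a \<Rightarrow> 'a set" where
  "fundamental_circuit E indep B f = (THE C. circuit E indep C \<and> C \<subseteq> B \<union> {f})"

definition bounded_interval :: "real set \<Rightarrow> bool" where
  "bounded_interval J \<longleftrightarrow> (\<exists>a b. (a \<le> b \<and> J = {a..b}) \<or> (a < b \<and> J = {a<..<b}))"

definition uncertainty_area :: "real set \<Rightarrow> bool" where
  "uncertainty_area S \<longleftrightarrow>
     (\<exists>I. finite I \<and> I \<noteq> {} \<and> (\<forall>J\<in>I. bounded_interval J) \<and> S = \<Union>I)"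

definition uncertainty_matroid ::
  "'a set \<Rightarrow> ('a set \<Rightarrow> bool) \<Rightarrow> ('a \<Rightarrow> real set) \<Rightarrow> ('a \<Rightarrow> real) \<Rightarrow> bool" where
  "uncertainty_matroid E indep A w \<longleftrightarrow>
     matroid E indep \<and> (\<forall>e\<in>E. uncertainty_area (A e) \<and> w e \<in> A e)"

definition lower :: "('a \<Rightarrow> real set) \<Rightarrow> 'a \<Rightarrow> real" where
  "lower A e = Inf (A e)"

definition upper :: "('a \<Rightarrow> real set) \<Rightarrow> 'a \<Rightarrow> real" where
  "upper A e = Sup (A e)"

definition min_weight_basis :: "('a set \<Rightarrow> bool) \<Rightarrow> ('a \<Rightarrow> real) \<Rightarrow> 'a set \<Rightarrow> bool" where
  "min_weight_basis indep c B \<longleftrightarrow>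
     basis indep B \<and> (\<forall>B'. basis indep B' \<longrightarrow> sum c B \<le> sum c B')"

definition consistent_assignment ::
  "'a set \<Rightarrow> ('a \<Rightarrow> real set) \<Rightarrow> ('a \<Rightarrow> real) \<Rightarrow> 'a set \<Rightarrow> ('a \<Rightarrow> real) \<Rightarrow> bool" where
  "consistent_assignment E A w Q w' \<longleftrightarrow> (\<forall>e\<in>E. w' e \<in> A e) \<and> (\<forall>e\<in>Q. w' e = w e)"

definition verifies ::
  "'a set \<Rightarrow> ('a set \<Rightarrow> bool) \<Rightarrow> ('a \<Rightarrow> real set) \<Rightarrow> ('a \<Rightarrow> real) \<Rightarrow> 'a set \<Rightarrow> 'a set \<Rightarrow> bool" where
  "verifies E indep A w Q B \<longleftrightarrow>
     Q \<subseteq> E \<and> (\<forall>w'. consistent_assignment E A w Q w' \<longrightarrow> min_weight_basis indep w' B)"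

end

theory Submission
  imports Defs
begin

lemma aug_iter:
  assumes m: "matroid E indep"
  shows "indep X \<Longrightarrow> indep Y \<Longrightarrow> card X \<le> card Y \<Longrightarrow>
    \<exists>Z. indep Z \<and> X \<subseteq> Z \<and> Z \<subseteq> X \<union> Y \<and> card Z = card Y"
proof (induction "card Y - card X" arbitrary: X)
  case 0
  then show ?case by auto
next
  case (Suc n)
  then have lt: "card X < card Y" by linarith
  from m have aug: "\<And>X Y. indep X \<Longrightarrow> indep Y \<Longrightarrow> card X < card Y \<Longrightarrow> (\<exists>y\<in>Y - X. indep (insert y X))"
    unfolding matroid_def by blast
  from m have fin: "\<And>X. indep X \<Longrightarrow> finite X" unfolding matroid_def by (meson finite_subset)
  obtain y where y: "y \<in> Y - X" "indep (insert y X)" using aug[OF Suc.prems(1,2) lt] by blast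
  have c: "card (insert y X) = card X + 1" using y fin[OF Suc.prems(1)] by simp
  have "n = card Y - card (insert y X)" using c Suc.hyps(2) by simp
  from Suc.hyps(1)[OF this y(2) Suc.prems(2)] c lt
  obtain Z where "indep Z" "insert y X \<subseteq> Z" "Z \<subseteq> insert y X \<union> Y" "card Z = card Y" by auto
  then show ?case using y by blast
qed

lemma circuit_exists:
  assumes m: "matroid E indep" and "X \<subseteq> E" and "\<not> indep X"
  shows "\<exists>C. circuit E indep C \<and> C \<subseteq> X"
proof -
  let ?P = "\<lambda>D. D \<subseteq> X \<and> \<not> indep D"
  obtain D where D: "?P D" "\<forall>D'. ?P D' \<longrightarrow> card D \<le> card D'"
    using ex_has_least_nat[of ?P X card] assms by blast
  have fX: "finite X" using m assms(2) unfolding matroid_def by (meson finite_subset)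
  have "\<forall>D'. D' \<subset> D \<longrightarrow> indep D'"
  proof (intro allI impI)
    fix D' assume "D' \<subset> D"
    then have "card D' < card D" using D(1) fX by (meson psubset_card_mono finite_subset)
    have sX: "D' \<subseteq> X" using D(1) \<open>D' \<subset> D\<close> by auto
    show "indep D'"
    proof (rule ccontr)
      assume "\<not> indep D'"
      then have "card D \<le> card D'" using D(2) sX by blast
      then show False using \<open>card D' < card D\<close> by simp
    qed
  qed
  then have mn: "\<forall>D'. D' \<subset> D \<longrightarrow> indep D'" .
  have DE: "D \<subseteq> E" using D(1) assms(2) by auto
  have nd: "\<not> indep D" using D(1) by simp
  have "circuit E indep D" unfolding circuit_def using DE nd mn by (intro conjI) assumption+
  then show ?thesis using D(1) by blast
qed

lemma circuit_unique:
  assumes m: "matroid E indep" and I: "indep I" and f: "f \<notin> I"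
    and c1: "circuit E indep C1" "C1 \<subseteq> insert f I"
    and c2: "circuit E indep C2" "C2 \<subseteq> insert f I"
  shows "C1 = C2"
proof (rule ccontr)
  assume ne: "C1 \<noteq> C2"
  have down: "\<And>X Y. indep X \<Longrightarrow> Y \<subseteq> X \<Longrightarrow> indep Y" using m unfolding matroid_def by blast
  have fin: "\<And>X. indep X \<Longrightarrow> finite X" using m unfolding matroid_def by (meson finite_subset)
  have fI: "finite I" using fin I .
  have n1: "\<not> indep C1" and p1: "\<And>D. D \<subset> C1 \<Longrightarrow> indep D" using c1(1) unfolding circuit_def by blast+
  have n2: "\<not> indep C2" and p2: "\<And>D. D \<subset> C2 \<Longrightarrow> indep D" using c2(1) unfolding circuit_def by blast+
  have "\<not> C1 \<subseteq> C2"
  proof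
    assume "C1 \<subseteq> C2"
    then have "C1 \<subset> C2" using ne by auto
    then show False using p2 n1 by blast
  qed
  then obtain x where x: "x \<in> C1" "x \<notin> C2" by auto
  have fC1: "f \<in> C1"
  proof (rule ccontr)
    assume "f \<notin> C1" then have "C1 \<subseteq> I" using c1(2) by auto
    then show False using down[OF I] n1 by blast
  qed
  have fC2: "f \<in> C2"
  proof (rule ccontr)
    assume "f \<notin> C2" then have "C2 \<subseteq> I" using c2(2) by auto
    then show False using down[OF I] n2 by blast
  qed
  have xf: "x \<noteq> f" using x fC2 by auto
  have xI: "x \<in> I" using x xf c1(2) by auto
  have i1: "indep (C1 - {x})" using p1 x by blast
  let ?W = "insert f I - {x}"
  have cW: "card ?W = card I" using fI f xI xf by simp
  have sub: "C1 - {x} \<subseteq> ?W" using c1(2) by auto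
  have "card (C1 - {x}) \<le> card I" using card_mono[OF _ sub] fI cW by simp
  then obtain Z where Z: "indep Z" "C1 - {x} \<subseteq> Z" "Z \<subseteq> (C1 - {x}) \<union> I" "card Z = card I"
    using aug_iter[OF m i1 I] by blast
  have "x \<notin> Z"
  proof
    assume "x \<in> Z" then have "C1 \<subseteq> Z" using Z by auto
    then show False using down[OF Z(1)] n1 by blast
  qed
  then have "Z \<subseteq> ?W" using Z c1(2) by auto
  then have "Z = ?W" using card_subset_eq[of ?W Z] fI cW Z(4) by simp
  then have "C2 \<subseteq> Z" using c2(2) x by auto
  then show False using down[OF Z(1)] n2 by blast
qed

lemma sum_upd:
  assumes "finite X"
  fixes f :: "'b \<Rightarrow> real"
  shows "sum (f(a:=v)) X = sum f X + (if a \<in> X then v - f a else 0)"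
proof (cases "a \<in> X")
  case True
  have "sum (f(a:=v)) X = v + sum (f(a:=v)) (X - {a})" using True assms by (simp add: sum.remove)
  also have "sum (f(a:=v)) (X - {a}) = sum f (X - {a})" by (rule sum.cong) auto
  also have "sum f X = f a + sum f (X - {a})" using True assms by (simp add: sum.remove)
  then have "sum f (X - {a}) = sum f X - f a" by simp
  finally show ?thesis using True by simp
next
  case False
  have "sum (f(a:=v)) X = sum f X" by (rule sum.cong) (use False in auto)
  then show ?thesis using False by simp
qed

lemma ua_bdd: "uncertainty_area (S::real set) \<Longrightarrow> bdd_above S"
proof -
  assume ua: "uncertainty_area S"
      obtain I where I0: "finite I \<and> I \<noteq> {} \<and> (\<forall>J\<in>I. bounded_interval J) \<and> S = \<Union>I"
        using ua[unfolded uncertainty_area_def] by (rule exE)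
      have I1: "finite I" using I0 by (elim conjE) assumption
      have I2: "\<forall>J\<in>I. bounded_interval J" using I0 by (elim conjE) assumption
      have I3: "S = \<Union>I" using I0 by (elim conjE) assumption
      note I = I1 I2 I3
      have "\<forall>J\<in>I. bdd_above J"
      proof
        fix J assume "J \<in> I"
        then obtain a b where "(a \<le> b \<and> J = {a..b}) \<or> (a < b \<and> J = {a<..<b})"
          using I unfolding bounded_interval_def by blast
        then show "bdd_above J" by (elim disjE conjE) auto
      qed
      then show ?thesis using bdd_above_UN[of I "\<lambda>J. J"] I by simp
qed

theorem lemma10:
  fixes E :: "'a set" and indep :: "'a set \<Rightarrow> bool"
    and A :: "'a \<Rightarrow> real set" and w :: "'a \<Rightarrow> real"
    and B Q :: "'a set" and e e' :: 'a
  assumes "uncertainty_matroid E indep A w"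
    and "min_weight_basis indep w B"
    and "verifies E indep A w Q B"
    and "e \<in> B" and "e' \<in> E" and "e' \<notin> B"
    and "upper A e = upper A e'" and "upper A e' = w e" and "w e = w e'"
    and "e \<in> fundamental_circuit E indep B e'"
  shows "verifies E indep A w ((Q - {e'}) \<union> {e}) ((B - {e}) \<union> {e'})"
proof -
  have m: "matroid E indep" using assms(1) unfolding uncertainty_matroid_def by blast
  have down: "\<And>X Y. indep X \<Longrightarrow> Y \<subseteq> X \<Longrightarrow> indep Y" using m unfolding matroid_def by blast
  have inE: "\<And>X. indep X \<Longrightarrow> X \<subseteq> E" using m unfolding matroid_def by blast
  have fE: "finite E" using m unfolding matroid_def by blast
  have fin: "\<And>X. indep X \<Longrightarrow> finite X" using fE inE by (meson finite_subset)
  have aug: "\<And>X Y. indep X \<Longrightarrow> indep Y \<Longrightarrow> card X < card Y \<Longrightarrow> (\<exists>y\<in>Y - X. indep (insert y X))"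
    using m unfolding matroid_def by blast
  have bB: "basis indep B" using assms(2) unfolding min_weight_basis_def by blast
  have iB: "indep B" using bB unfolding basis_def by blast
  have BE: "B \<subseteq> E" using inE iB .
  have fB: "finite B" using fin iB .
  have ee': "e \<noteq> e'" using assms(4,6) by auto
  have "\<not> indep (insert e' B)" using bB assms(6) unfolding basis_def by blast
  then obtain C0 where C0: "circuit E indep C0" "C0 \<subseteq> insert e' B"
    using circuit_exists[OF m, of "insert e' B"] BE assms(5) by blast
  have "fundamental_circuit E indep B e' = C0"
    unfolding fundamental_circuit_def
  proof (rule the_equality)
    show "circuit E indep C0 \<and> C0 \<subseteq> B \<union> {e'}" using C0 by auto
  next
    fix C assume "circuit E indep C \<and> C \<subseteq> B \<union> {e'}"
    then show "C = C0" using circuit_unique[OF m iB assms(6), of C C0] C0 by auto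
  qed
  then have eC0: "e \<in> C0" using assms(10) by simp
  define B' where "B' = (B - {e}) \<union> {e'}"
  have B'ins: "B' = insert e' (B - {e})" unfolding B'_def by auto
  have iB': "indep B'"
  proof (rule ccontr)
    assume "\<not> indep B'"
    then obtain D where D: "circuit E indep D" "D \<subseteq> B'"
      using circuit_exists[OF m, of B'] BE assms(5) unfolding B'_def by blast
    then have "D \<subseteq> insert e' B" unfolding B'_def by auto
    then have "D = C0" using circuit_unique[OF m iB assms(6), of D C0] C0 D by auto
    then show False using eC0 D ee' unfolding B'_def by auto
  qed
  have cB': "card B' = card B" using fB assms(4,6) unfolding B'ins by (cases "card B") (auto simp: card.insert_remove)
  have fB': "finite B'" using fin iB' .
  have bB': "basis indep B'"
    unfolding basis_def
  proof (intro conjI allI impI iB')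
    fix X assume X: "indep X \<and> B' \<subseteq> X"
    show "X = B'"
    proof (rule ccontr)
      assume "X \<noteq> B'"
      then have "B' \<subset> X" using X by auto
      then have "card B < card X" using cB' psubset_card_mono fin X by metis
      then obtain y where y: "y \<in> X - B" "indep (insert y B)" using aug iB X by blast
      then have "insert y B = B" using bB unfolding basis_def by blast
      then show False using y by auto
    qed
  qed
  let ?Q' = "(Q - {e'}) \<union> {e}"
  have QE: "Q \<subseteq> E" using assms(3) unfolding verifies_def by blast
  show ?thesis
    unfolding verifies_def B'_def[symmetric]
  proof (intro conjI allI impI)
    show "?Q' \<subseteq> E" using QE BE assms(4) by auto
  next
    fix w' assume cw': "consistent_assignment E A w ?Q' w'"
    define w'' where "w'' = w'(e' := w e')"
    have cw'': "consistent_assignment E A w Q w''"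
      unfolding consistent_assignment_def
    proof (intro conjI ballI)
      fix x assume "x \<in> E"
      then show "w'' x \<in> A x" using cw' assms(1,5) unfolding consistent_assignment_def
          uncertainty_matroid_def w''_def by auto
    next
      fix x assume "x \<in> Q"
      then show "w'' x = w x" using cw' unfolding consistent_assignment_def w''_def by auto
    qed
    have mB: "min_weight_basis indep w'' B" using assms(3) cw'' unfolding verifies_def by blast
    have we: "w'' e = w e" using cw' ee' unfolding consistent_assignment_def w''_def by auto
    have "sum w'' B' = w'' e' + sum w'' (B - {e})" unfolding B'ins using fB assms(6) by simp
    also have "sum w'' (B - {e}) = sum w'' B - w'' e" using fB assms(4) by (simp add: sum_diff1)
    finally have sB': "sum w'' B' = sum w'' B" using we assms(9) unfolding w''_def by simp
    have ww: "w' = w''(e' := w' e')" unfolding w''_def by simp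
    have "uncertainty_area (A e')" using assms(1,5) unfolding uncertainty_matroid_def by simp
    then have bd: "bdd_above (A e')" by (rule ua_bdd)
    have "w' e' \<in> A e'" using cw' assms(5) unfolding consistent_assignment_def by blast
    then have "w' e' \<le> upper A e'" unfolding upper_def using bd by (simp add: cSup_upper)
    then have le: "w' e' - w'' e' \<le> 0" using assms(8,9) unfolding w''_def by simp
    show "min_weight_basis indep w' B'"
      unfolding min_weight_basis_def
    proof (intro conjI allI impI bB')
      fix X assume bX: "basis indep X"
      then have fX: "finite X" using fin unfolding basis_def by blast
      have "sum w'' B \<le> sum w'' X" using mB bX unfolding min_weight_basis_def by blast
      have "sum w' B' = sum w'' B' + (w' e' - w'' e')"
        using sum_upd[OF fB', of w'' e' "w' e'"] ww unfolding B'ins by simp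
      also have "\<dots> \<le> sum w'' X + (if e' \<in> X then w' e' - w'' e' else 0)"
        using \<open>sum w'' B \<le> sum w'' X\<close> sB' le by auto
      also have "\<dots> = sum w' X" using sum_upd[OF fX, of w'' e' "w' e'"] ww by simp
      finally show "sum w' B' \<le> sum w' X" .
    qed
  qed
qed

end
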